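(* Let $n_t\ge 1$. The product $\prod_{i=1}^{n_t} C^2X_{t_i}$ of $n_t$ Toffoli gates that share the same two control qubits $c_1,c_2$ and have pairwise distinct target qubits $t_1,\dots,t_{n_t}$ (all distinct from the controls) can be implemented exactly, without auxiliary qubits, by a circuit of single-qubit gates and $2n_t+4$ CNOT gates.
   Context: $C^2X_{t}$ denotes the Toffoli gate: it flips target qubit $t$ if and only if both control qubits are in state $|1\rangle$. *)

theory Defs
  imports Complex_Main
begin

text \<open>n-qubit operators as matrices indexed by computational basis states.
  A basis state of n qubits is a bit assignment x :: nat \<Rightarrow> bool that is False
  outside the qubit indices 0..n-1.\<close>

type_synonym state = "nat \<Rightarrow> bool"
type_synonym op = "state \<Rightarrow> state \<Rightarrow> complex"

definition basis :: "nat \<Rightarrow> state set" where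
  "basis n = {x. \<forall>i. n \<le> i \<longrightarrow> \<not> x i}"

definition id_op :: op where
  "id_op x y = (if x = y then 1 else 0)"

definition op_mult :: "nat \<Rightarrow> op \<Rightarrow> op \<Rightarrow> op" where
  "op_mult n A B x y = (\<Sum>z\<in>basis n. A x z * B z y)"

text \<open>2x2 unitary matrices (single-qubit gates), indexed by bool (False = |0>, True = |1>).\<close>
definition unitary2 :: "(bool \<Rightarrow> bool \<Rightarrow> complex) \<Rightarrow> bool" where
  "unitary2 U \<longleftrightarrow> (\<forall>i j. (\<Sum>k\<in>UNIV. cnj (U k i) * U k j) = (if i = j then 1 else 0))"

datatype gate = Single nat "bool \<Rightarrow> bool \<Rightarrow> complex" | CNOT nat nat

fun gate_op :: "gate \<Rightarrow> op" where
  "gate_op (Single q U) x y = (if (\<forall>i. i \<noteq> q \<longrightarrow> x i = y i) then U (x q) (y q) else 0)"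
| "gate_op (CNOT c t) x y = (if x = y(t := (y t \<noteq> y c)) then 1 else 0)"

fun gate_wf :: "nat \<Rightarrow> gate \<Rightarrow> bool" where
  "gate_wf n (Single q U) \<longleftrightarrow> q < n \<and> unitary2 U"
| "gate_wf n (CNOT c t) \<longleftrightarrow> c < n \<and> t < n \<and> c \<noteq> t"

fun is_cnot :: "gate \<Rightarrow> bool" where
  "is_cnot (CNOT _ _) = True"
| "is_cnot (Single _ _) = False"

definition cnot_count :: "gate list \<Rightarrow> nat" where
  "cnot_count gs = length (filter is_cnot gs)"

text \<open>A circuit is a list of gates applied in order (first gate first);
  its operator is the product M_last \<cdot> ... \<cdot> M_first.\<close>
fun circuit_op :: "nat \<Rightarrow> gate list \<Rightarrow> op" where
  "circuit_op n [] = id_op"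
| "circuit_op n (g # gs) = op_mult n (circuit_op n gs) (gate_op g)"

definition toffoli_op :: "nat \<Rightarrow> nat \<Rightarrow> nat \<Rightarrow> op" where
  "toffoli_op c1 c2 t x y = (if x = y(t := (y t \<noteq> (y c1 \<and> y c2))) then 1 else 0)"

fun toffoli_prod :: "nat \<Rightarrow> nat \<Rightarrow> nat \<Rightarrow> nat list \<Rightarrow> op" where
  "toffoli_prod n c1 c2 [] = id_op"
| "toffoli_prod n c1 c2 (t # ts) = op_mult n (toffoli_op c1 c2 t) (toffoli_prod n c1 c2 ts)"

end

theory Submission
  imports Defs
begin

lemma finite_basis: "finite (basis n)"
proof -
  have "basis n \<subseteq> (\<lambda>S i. i \<in> S) ` Pow {..<n}"
  proof
    fix x assume "x \<in> basis n"
    hence "{i. x i} \<in> Pow {..<n}" by (auto simp: basis_def not_le[symmetric])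
    moreover have "x = (\<lambda>i. i \<in> {i. x i})" by simp
    ultimately show "x \<in> (\<lambda>S i. i \<in> S) ` Pow {..<n}" by blast
  qed
  thus ?thesis by (rule finite_subset) simp
qed

lemma basis_upd[simp]: "y \<in> basis n \<Longrightarrow> q < n \<Longrightarrow> y(q := v) \<in> basis n"
  by (auto simp: basis_def)

lemma collapse: "w \<in> basis n \<Longrightarrow> (\<Sum>z\<in>basis n. (A::state\<Rightarrow>complex) z * (if z = w then c else 0)) = A w * c"
proof -
  assume w: "w \<in> basis n"
  have "(\<Sum>z\<in>basis n. A z * (if z = w then c else 0)) = (\<Sum>z\<in>basis n. if z = w then A w * c else 0)"
    by (rule sum.cong) simp_all
  also have "\<dots> = A w * c" using w finite_basis by (simp add: sum.delta)
  finally show ?thesis .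
qed

lemma circuit_append:
  "y \<in> basis n \<Longrightarrow> circuit_op n (gs1 @ gs2) x y = (\<Sum>z\<in>basis n. circuit_op n gs2 x z * circuit_op n gs1 z y)"
proof (induction gs1 arbitrary: y)
  case Nil
  have "(\<Sum>z\<in>basis n. circuit_op n gs2 x z * circuit_op n [] z y) = (\<Sum>z\<in>basis n. circuit_op n gs2 x z * (if z = y then 1 else 0))"
    by (simp add: id_op_def)
  also have "\<dots> = circuit_op n gs2 x y" using Nil collapse[of y n "circuit_op n gs2 x" 1] by simp
  finally show ?case by simp
next
  case (Cons g gs1)
  have "circuit_op n ((g # gs1) @ gs2) x y = (\<Sum>w\<in>basis n. circuit_op n (gs1 @ gs2) x w * gate_op g w y)"
    by (simp add: op_mult_def)
  also have "\<dots> = (\<Sum>w\<in>basis n. (\<Sum>z\<in>basis n. circuit_op n gs2 x z * circuit_op n gs1 z w) * gate_op g w y)"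
    by (rule sum.cong) (auto simp: Cons.IH)
  also have "\<dots> = (\<Sum>w\<in>basis n. \<Sum>z\<in>basis n. circuit_op n gs2 x z * (circuit_op n gs1 z w * gate_op g w y))"
    by (simp add: sum_distrib_right mult.assoc)
  also have "\<dots> = (\<Sum>z\<in>basis n. \<Sum>w\<in>basis n. circuit_op n gs2 x z * (circuit_op n gs1 z w * gate_op g w y))"
    by (rule sum.swap)
  also have "\<dots> = (\<Sum>z\<in>basis n. circuit_op n gs2 x z * circuit_op n (g # gs1) z y)"
    by (simp add: op_mult_def sum_distrib_left)
  finally show ?case .
qed

lemma step_cnot[simp]: "y \<in> basis n \<Longrightarrow> t < n \<Longrightarrow>
  circuit_op n (CNOT c t # gs) x y = circuit_op n gs x (y(t := (y t \<noteq> y c)))"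
proof -
  assume y: "y \<in> basis n" "t < n"
  have "circuit_op n (CNOT c t # gs) x y = (\<Sum>z\<in>basis n. circuit_op n gs x z * (if z = y(t := (y t \<noteq> y c)) then 1 else 0))"
    by (simp add: op_mult_def)
  also have "\<dots> = circuit_op n gs x (y(t := (y t \<noteq> y c)))" using collapse[of "y(t := (y t \<noteq> y c))" n "circuit_op n gs x" 1] y by simp
  finally show ?thesis .
qed

lemma step_diag:
  assumes y: "y \<in> basis n" and U: "\<And>i j. U i j = (if i = j then d j else 0)"
  shows "circuit_op n (Single q U # gs) x y = circuit_op n gs x y * d (y q)"
proof -
  have "circuit_op n (Single q U # gs) x y = (\<Sum>z\<in>basis n. circuit_op n gs x z * (if z = y then d (y q) else 0))"
    unfolding circuit_op.simps op_mult_def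
  proof (rule sum.cong)
    fix z show "circuit_op n gs x z * gate_op (Single q U) z y = circuit_op n gs x z * (if z = y then d (y q) else 0)"
    proof (cases "\<forall>i. i \<noteq> q \<longrightarrow> z i = y i")
      case True
      have "(z = y) = (z q = y q)" using True by auto
      thus ?thesis using True by (simp add: U)
    next
      case False
      hence "z \<noteq> y" by auto
      thus ?thesis using False by auto
    qed
  qed simp
  also have "\<dots> = circuit_op n gs x y * d (y q)" using collapse[OF y] .
  finally show ?thesis .
qed

lemma step_single:
  assumes y: "y \<in> basis n" and q: "q < n"
  shows "circuit_op n (Single q U # gs) x y = circuit_op n gs x (y(q:=False)) * U False (y q) + circuit_op n gs x (y(q:=True)) * U True (y q)"
proof -
  have "circuit_op n (Single q U # gs) x y = (\<Sum>z\<in>basis n. circuit_op n gs x z * (if z = y(q:=False) then U False (y q) else 0)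
     + circuit_op n gs x z * (if z = y(q:=True) then U True (y q) else 0))"
    unfolding circuit_op.simps op_mult_def
  proof (rule sum.cong)
    fix z show "circuit_op n gs x z * gate_op (Single q U) z y = circuit_op n gs x z * (if z = y(q:=False) then U False (y q) else 0)
     + circuit_op n gs x z * (if z = y(q:=True) then U True (y q) else 0)"
    proof (cases "\<forall>i. i \<noteq> q \<longrightarrow> z i = y i")
      case True
      obtain v where z: "z = y(q := v)" using True by (intro that[of "z q"]) (auto simp: fun_eq_iff)
      have ne: "y(q:=True) \<noteq> y(q:=False)" by (metis fun_upd_same)
      show ?thesis unfolding z using ne by (cases v) (auto simp: ne[symmetric])
    next
      case False
      hence "z \<noteq> y(q:=False)" "z \<noteq> y(q:=True)" by auto
      thus ?thesis using False by auto
    qed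
  qed simp
  also have "\<dots> = circuit_op n gs x (y(q:=False)) * U False (y q) + circuit_op n gs x (y(q:=True)) * U True (y q)"
    using collapse[of "y(q:=False)" n "circuit_op n gs x"] collapse[of "y(q:=True)" n "circuit_op n gs x"] y q
    by (simp add: sum.distrib)
  finally show ?thesis .
qed


declare circuit_op.simps(2)[simp del]

definition w8 :: complex where "w8 = cis (pi/4)"
definition Tg :: "nat \<Rightarrow> nat \<Rightarrow> gate" where
  "Tg k q = Single q (\<lambda>i j. if i = j then (if j then w8 ^ k else 1) else 0)"

lemma w8_8: "w8 ^ 8 = 1" by (simp add: w8_def DeMoivre)
lemma w8_4: "w8 ^ 4 = -1" by (simp add: w8_def DeMoivre)
lemma w8_16: "w8 ^ 16 = 1" using w8_8 by (metis power_mult mult.commute num_double numeral_times_numeral power_one)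
lemma w8_4': "w8 * (w8 * (w8 * w8)) = -1" using w8_4 by (simp add: power_numeral_reduce mult.assoc)
lemma w8_mod: "w8 ^ n = w8 ^ (n mod 8)"
proof -
  have "w8 ^ n = w8 ^ (8 * (n div 8) + n mod 8)" by simp
  also have "\<dots> = w8 ^ (n mod 8)" by (simp only: power_add power_mult w8_8) simp
  finally show ?thesis .
qed

lemma step_T[simp]: "y \<in> basis n \<Longrightarrow> circuit_op n (Tg k q # gs) x y = circuit_op n gs x y * w8 ^ (if y q then k else 0)"
  unfolding Tg_def by (rule step_diag) auto

definition Dc :: "nat \<Rightarrow> nat \<Rightarrow> nat \<Rightarrow> gate list" where
  "Dc a b c = [CNOT b c, Tg 7 c, CNOT a c, Tg 1 c, CNOT b c, Tg 7 c, CNOT a c, Tg 1 b, Tg 1 c,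
     CNOT a b, Tg 1 a, Tg 7 b, CNOT a b]"

lemma pw: "(w8::complex) ^ i * w8 ^ j = w8 ^ (i + j)" "w8 ^ i * (w8 ^ j * z) = w8 ^ (i + j) * z"
  by (simp_all add: power_add)

lemma D_op:
  assumes y: "y \<in> basis n" and abc: "a < n" "b < n" "c < n" "a \<noteq> b" "a \<noteq> c" "b \<noteq> c"
  shows "circuit_op n (Dc a b c @ gs) x y = circuit_op n gs x y * (if y a \<and> y b \<and> y c then -1 else 1)"
  using y abc
  apply (simp add: Dc_def fun_upd_idem mult.assoc pw)
  apply (cases "y a"; cases "y b"; cases "y c")
  apply (simp_all add: fun_upd_idem w8_16 w8_4')
  done


definition sq2 :: complex where "sq2 = complex_of_real (sqrt 2)"
definition hm :: "bool \<Rightarrow> bool \<Rightarrow> complex" where "hm i j = (if i \<and> j then -1 else 1) / sq2"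
definition Hg :: "nat \<Rightarrow> gate" where "Hg q = Single q hm"

lemma sq2_sq: "sq2 * sq2 = 2"
  unfolding sq2_def by (simp flip: of_real_mult)
lemma sq2_nz: "sq2 \<noteq> 0" using sq2_sq by auto

definition toff6 :: "nat \<Rightarrow> nat \<Rightarrow> nat \<Rightarrow> gate list" where
  "toff6 a b c = Hg c # Dc a b c @ [Hg c]"

lemma half: "1 / sq2 * (1 / sq2) = 1/2" using sq2_sq by (simp add: field_simps)

lemma toff6_op:
  assumes x: "x \<in> basis n" and y: "y \<in> basis n" and abc: "a < n" "b < n" "c < n" "a \<noteq> b" "a \<noteq> c" "b \<noteq> c"
  shows "circuit_op n (toff6 a b c) x y = (if x = y(c := (y c \<noteq> (y a \<and> y b))) then 1 else 0)"
proof -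
  have e: "circuit_op n (toff6 a b c) x y = (\<Sum>v\<in>UNIV. \<Sum>u\<in>UNIV. (if x = y(c := u) then 1 else 0) * hm u v *
       (if y a \<and> y b \<and> v then -1 else 1) * hm v (y c))"
    using y abc unfolding toff6_def Hg_def
    by (simp add: step_single D_op circuit_op.simps(1) id_op_def UNIV_bool algebra_simps)
  show ?thesis
  proof (cases "\<forall>i. i \<noteq> c \<longrightarrow> x i = y i")
    case True
    obtain u where xu: "x = y(c := u)" using True by (intro that[of "x c"]) (auto simp: fun_eq_iff)
    have ne: "y(c:=True) \<noteq> y(c:=False)" by (metis fun_upd_same)
    have ne2: "\<And>v w. (y(c := v) = y(c := w)) = (v = w)" by (rule iffI) (metis fun_upd_same, simp)
    show ?thesis unfolding e unfolding xu ne2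
      by (cases u; cases "y a"; cases "y b"; cases "y c") (simp_all add: UNIV_bool hm_def field_simps sq2_sq sq2_nz)
  next
    case False
    hence "\<And>u. x \<noteq> y(c := u)" by auto
    thus ?thesis unfolding e by simp
  qed
qed


fun fanf :: "nat \<Rightarrow> nat list \<Rightarrow> state \<Rightarrow> state" where
  "fanf t1 [] y = y"
| "fanf t1 (r # rs) y = fanf t1 rs (y(r := (y r \<noteq> y t1)))"

definition fan :: "nat \<Rightarrow> nat list \<Rightarrow> gate list" where
  "fan t1 rs = map (\<lambda>t. CNOT t1 t) rs"

lemma fanf_basis: "y \<in> basis n \<Longrightarrow> \<forall>r\<in>set rs. r < n \<Longrightarrow> fanf t1 rs y \<in> basis n"
  by (induction rs arbitrary: y) auto

lemma fan_op: "y \<in> basis n \<Longrightarrow> \<forall>r\<in>set rs. r < n \<Longrightarrow>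
  circuit_op n (fan t1 rs @ gs) x y = circuit_op n gs x (fanf t1 rs y)"
  by (induction rs arbitrary: y) (auto simp: fan_def)

lemma fanf_pt: "distinct rs \<Longrightarrow> t1 \<notin> set rs \<Longrightarrow>
  fanf t1 rs y i = (if i \<in> set rs then y i \<noteq> y t1 else y i)"
  by (induction rs arbitrary: y) auto

definition G :: "nat \<Rightarrow> nat \<Rightarrow> nat list \<Rightarrow> state \<Rightarrow> state" where
  "G c1 c2 ts y = (\<lambda>i. if i \<in> set ts then y i \<noteq> (y c1 \<and> y c2) else y i)"

lemma G_basis: "y \<in> basis n \<Longrightarrow> \<forall>r\<in>set ts. r < n \<Longrightarrow> G c1 c2 ts y \<in> basis n"
  by (auto simp: basis_def G_def)

lemma tp: "y \<in> basis n \<Longrightarrow> distinct (c1 # c2 # ts) \<Longrightarrow> \<forall>r\<in>set ts. r < n \<Longrightarrow>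
  toffoli_prod n c1 c2 ts x y = (if x = G c1 c2 ts y then 1 else 0)"
proof (induction ts arbitrary: x)
  case Nil
  then show ?case by (simp add: id_op_def G_def)
next
  case (Cons t ts)
  have "toffoli_prod n c1 c2 (t # ts) x y = (\<Sum>z\<in>basis n. toffoli_op c1 c2 t x z * (if z = G c1 c2 ts y then 1 else 0))"
    using Cons by (auto simp: op_mult_def intro!: sum.cong)
  also have "\<dots> = toffoli_op c1 c2 t x (G c1 c2 ts y)"
    using collapse[OF G_basis[of y n ts c1 c2], of "toffoli_op c1 c2 t x" 1] Cons.prems by simp
  also have "\<dots> = (if x = G c1 c2 (t # ts) y then 1 else 0)"
  proof -
    have "(G c1 c2 ts y)(t := (G c1 c2 ts y t \<noteq> (G c1 c2 ts y c1 \<and> G c1 c2 ts y c2))) = G c1 c2 (t # ts) y"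
      using Cons.prems by (auto simp: G_def fun_eq_iff)
    thus ?thesis by (simp add: toffoli_op_def)
  qed
  finally show ?case .
qed

lemma w8_cnj: "cnj w8 * w8 = 1" by (simp add: w8_def cis_cnj cis_mult)

lemma unitary_T: "unitary2 (\<lambda>i j. if i = j then (if j then w8 ^ k else 1) else 0)"
proof -
  have "cnj (w8 ^ k) * w8 ^ k = (cnj w8 * w8) ^ k" by (simp add: power_mult_distrib)
  hence "cnj (w8 ^ k) * w8 ^ k = 1" by (simp add: w8_cnj)
  thus ?thesis by (auto simp: unitary2_def UNIV_bool)
qed

lemma unitary_H: "unitary2 hm"
proof -
  have c: "cnj sq2 = sq2" by (simp add: sq2_def)
  show ?thesis unfolding unitary2_def
    by (auto simp: UNIV_bool hm_def c field_simps sq2_sq sq2_nz)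
qed

lemma wf_toff6: "a < n \<Longrightarrow> b < n \<Longrightarrow> c < n \<Longrightarrow> a \<noteq> b \<Longrightarrow> a \<noteq> c \<Longrightarrow> b \<noteq> c \<Longrightarrow> \<forall>g\<in>set (toff6 a b c). gate_wf n g"
  by (simp add: toff6_def Dc_def Hg_def Tg_def unitary_T unitary_H)

lemma cnt: "cnot_count (fan t1 rs @ toff6 a b c @ fan t1 rs) = 2 * length rs + 6"
  by (simp add: cnot_count_def fan_def toff6_def Dc_def Hg_def Tg_def comp_def)

theorem lemma5:
  fixes n c1 c2 :: nat and ts :: "nat list"
  assumes "length ts \<ge> 1"
    and "distinct (c1 # c2 # ts)"
    and "\<forall>q\<in>set (c1 # c2 # ts). q < n"
  shows "\<exists>gs. (\<forall>g\<in>set gs. gate_wf n g)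
           \<and> cnot_count gs = 2 * length ts + 4
           \<and> (\<forall>x\<in>basis n. \<forall>y\<in>basis n.
                 circuit_op n gs x y = toffoli_prod n c1 c2 ts x y)"
proof -
  obtain t1 rs where ts: "ts = t1 # rs" using assms(1) by (cases ts) auto
  have d: "distinct rs" "t1 \<notin> set rs" "c1 \<noteq> c2" "c1 \<noteq> t1" "c2 \<noteq> t1" "c1 \<notin> set rs" "c2 \<notin> set rs"
    using assms(2) ts by auto
  have lt: "c1 < n" "c2 < n" "t1 < n" "\<forall>r\<in>set rs. r < n" using assms(3) ts by auto
  define gs where "gs = fan t1 rs @ toff6 c1 c2 t1 @ fan t1 rs"
  have wf: "\<forall>g\<in>set gs. gate_wf n g"
    using wf_toff6[of c1 n c2 t1] d lt by (auto simp: gs_def fan_def)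
  have cc: "cnot_count gs = 2 * length ts + 4" using cnt ts by (simp add: gs_def)
  have eq: "circuit_op n gs x y = toffoli_prod n c1 c2 ts x y" if x: "x \<in> basis n" and y: "y \<in> basis n" for x y
  proof -
    define w1 where "w1 = fanf t1 rs y"
    define w2 where "w2 = w1(t1 := (w1 t1 \<noteq> (w1 c1 \<and> w1 c2)))"
    have w1b: "w1 \<in> basis n" using fanf_basis[OF y lt(4)] by (simp add: w1_def)
    have w2b: "w2 \<in> basis n" using w1b lt by (simp add: w2_def)
    have "circuit_op n gs x y = circuit_op n (toff6 c1 c2 t1 @ fan t1 rs) x w1"
      unfolding gs_def w1_def using fan_op[OF y lt(4)] by simp
    also have "\<dots> = (\<Sum>z\<in>basis n. circuit_op n (fan t1 rs) x z * circuit_op n (toff6 c1 c2 t1) z w1)"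
      by (rule circuit_append[OF w1b])
    also have "\<dots> = (\<Sum>z\<in>basis n. circuit_op n (fan t1 rs) x z * (if z = w2 then 1 else 0))"
      by (rule sum.cong) (use toff6_op w1b lt d in \<open>auto simp: w2_def\<close>)
    also have "\<dots> = circuit_op n (fan t1 rs) x w2" using collapse[OF w2b] by simp
    also have "\<dots> = (if x = fanf t1 rs w2 then 1 else 0)"
      using fan_op[OF w2b lt(4), of t1 "[]" x] by (simp add: circuit_op.simps(1) id_op_def)
    also have "fanf t1 rs w2 = G c1 c2 ts y"
      using d unfolding ts by (auto simp: fun_eq_iff fanf_pt w2_def w1_def G_def)
    also have "(if x = G c1 c2 ts y then 1 else 0) = toffoli_prod n c1 c2 ts x y"
      using tp[OF y assms(2)] assms(3) by simp
    finally show ?thesis .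
  qed
  show ?thesis using wf cc eq by blast
qed

end
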